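(* Let $\{G_i\}_{i\in I}$ be a family of Hausdorff topological groups. Assume that each $G_i$ contains a closed, extremely amenable, co-precompact subgroup $H_i$ such that the universal minimal flow of $G_i$ is (isomorphic, as a $G_i$-flow, to) the completion $\widehat{G_i/H_i}$. Then the universal minimal flow of the product group commutes with the product: $$\mathrm{UMF}\Big(\prod_{i} G_i\Big) = \prod_{i} \mathrm{UMF}(G_i).$$
   Context: A flow of a topological group $G$ is a nonempty compact (Hausdorff) space with a jointly continuous $G$-action; it is minimal if every orbit is dense. The universal minimal flow $\mathrm{UMF}(G)$ is the (unique up to isomorphism) minimal flow admitting a $G$-equivariant continuous surjection onto every minimal flow. A topological group is extremely amenable if every continuous action on a nonempty compact space has a fixed point. The right uniform structure on $G$ has basis of entourages $\{(x,y) \mid x\in Uy\}$, $U$ ranging over identity neighbourhoods. A closed subgroup $H\le G$ is co-precompact if the coset space $G/H$, endowed with the quotient of the right uniform structure of $G$, is precompact; $\widehat{G/H}$ denotes its (Hausdorff) completion, a compact $G$-space. *)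

theory Defs
  imports "HOL-Analysis.Analysis" "HOL-Algebra.Product_Groups"
begin

definition topological_group :: "'g monoid \<Rightarrow> 'g topology \<Rightarrow> bool" where
  "topological_group G T \<longleftrightarrow>
     group G \<and> topspace T = carrier G \<and>
     continuous_map (prod_topology T T) T (\<lambda>(x, y). x \<otimes>\<^bsub>G\<^esub> y) \<and>
     continuous_map T T (\<lambda>x. inv\<^bsub>G\<^esub> x)"

definition hausdorff_topological_group :: "'g monoid \<Rightarrow> 'g topology \<Rightarrow> bool" where
  "hausdorff_topological_group G T \<longleftrightarrow> topological_group G T \<and> Hausdorff_space T"

definition flow :: "'g monoid \<Rightarrow> 'g topology \<Rightarrow> 'x topology \<Rightarrow> ('g \<Rightarrow> 'x \<Rightarrow> 'x) \<Rightarrow> bool" where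
  "flow G T X act \<longleftrightarrow>
     topspace X \<noteq> {} \<and> compact_space X \<and> Hausdorff_space X \<and>
     (\<forall>g\<in>carrier G. \<forall>x\<in>topspace X. act g x \<in> topspace X) \<and>
     (\<forall>x\<in>topspace X. act \<one>\<^bsub>G\<^esub> x = x) \<and>
     (\<forall>g\<in>carrier G. \<forall>h\<in>carrier G. \<forall>x\<in>topspace X.
        act (g \<otimes>\<^bsub>G\<^esub> h) x = act g (act h x)) \<and>
     continuous_map (prod_topology T X) X (\<lambda>(g, x). act g x)"

definition minimal_flow :: "'g monoid \<Rightarrow> 'g topology \<Rightarrow> 'x topology \<Rightarrow> ('g \<Rightarrow> 'x \<Rightarrow> 'x) \<Rightarrow> bool" where
  "minimal_flow G T X act \<longleftrightarrow>
     flow G T X act \<and>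
     (\<forall>x\<in>topspace X. X closure_of ((\<lambda>g. act g x) ` carrier G) = topspace X)"

definition flow_hom :: "'g monoid \<Rightarrow> 'x topology \<Rightarrow> ('g \<Rightarrow> 'x \<Rightarrow> 'x) \<Rightarrow>
                        'y topology \<Rightarrow> ('g \<Rightarrow> 'y \<Rightarrow> 'y) \<Rightarrow> ('x \<Rightarrow> 'y) \<Rightarrow> bool" where
  "flow_hom G X actX Y actY f \<longleftrightarrow>
     continuous_map X Y f \<and>
     (\<forall>g\<in>carrier G. \<forall>x\<in>topspace X. f (actX g x) = actY g (f x))"

text \<open>Since a minimal flow of G is a
  compact Hausdorff space with a dense subset (an orbit) of size at most |G|, it has cardinality
  at most 2^2^|G|, hence every minimal flow is isomorphic to one carried by
  'g set set; so this is equivalent to quantifying over all minimal flows.\<close>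

definition is_UMF :: "'g monoid \<Rightarrow> 'g topology \<Rightarrow> 'x topology \<Rightarrow> ('g \<Rightarrow> 'x \<Rightarrow> 'x) \<Rightarrow> bool" where
  "is_UMF G T X act \<longleftrightarrow>
     minimal_flow G T X act \<and>
     (\<forall>(Y :: 'g set set topology) actY. minimal_flow G T Y actY \<longrightarrow>
        (\<exists>f. flow_hom G X act Y actY f \<and> f ` topspace X = topspace Y))"

text \<open>As above it suffices to consider flows on 'g set set
  (every flow contains a minimal subflow, of cardinality at most 2^2^|H|).\<close>

definition extremely_amenable_subgroup :: "'g monoid \<Rightarrow> 'g topology \<Rightarrow> 'g set \<Rightarrow> bool" where
  "extremely_amenable_subgroup G T H \<longleftrightarrow>
     (\<forall>(Y :: 'g set set topology) act.
        flow (G\<lparr>carrier := H\<rparr>) (subtopology T H) Y act \<longrightarrow>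
        (\<exists>y\<in>topspace Y. \<forall>h\<in>H. act h y = y))"

text \<open>The quotient of the right uniformity (entourages {(x,y) | x \<in> U y}) on G/H (left cosets)
  has basic entourages {(xH,yH) | x \<in> U y H}; precompactness of G/H means:
  for every open identity neighbourhood U there is a finite F \<subseteq> G with G = U F H.\<close>

definition co_precompact :: "'g monoid \<Rightarrow> 'g topology \<Rightarrow> 'g set \<Rightarrow> bool" where
  "co_precompact G T H \<longleftrightarrow>
     (\<forall>U. openin T U \<and> \<one>\<^bsub>G\<^esub> \<in> U \<longrightarrow>
        (\<exists>F. finite F \<and> F \<subseteq> carrier G \<and>
             carrier G = {u \<otimes>\<^bsub>G\<^esub> f \<otimes>\<^bsub>G\<^esub> h | u f h. u \<in> U \<and> f \<in> F \<and> h \<in> H}))"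

text \<open>(K, act, j) is (isomorphic to) the completion of G/H: K is a G-flow (compact Hausdorff,
  carrying its unique uniformity, whose entourages are the neighbourhoods of the diagonal),
  j : G \<rightarrow> K is constant exactly on left cosets of H (so it is an injective map G/H \<rightarrow> K),
  G-equivariant for left translation, has dense image, and is a uniform embedding of G/H with
  the quotient of the right uniformity.\<close>

definition completion_flow ::
  "'g monoid \<Rightarrow> 'g topology \<Rightarrow> 'g set \<Rightarrow> 'x topology \<Rightarrow> ('g \<Rightarrow> 'x \<Rightarrow> 'x) \<Rightarrow> ('g \<Rightarrow> 'x) \<Rightarrow> bool" where
  "completion_flow G T H K act j \<longleftrightarrow>
     flow G T K act \<and>
     j \<in> carrier G \<rightarrow> topspace K \<and>
     (\<forall>x\<in>carrier G. \<forall>y\<in>carrier G. j x = j y \<longleftrightarrow> inv\<^bsub>G\<^esub> x \<otimes>\<^bsub>G\<^esub> y \<in> H) \<and>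
     (\<forall>g\<in>carrier G. \<forall>x\<in>carrier G. act g (j x) = j (g \<otimes>\<^bsub>G\<^esub> x)) \<and>
     K closure_of (j ` carrier G) = topspace K \<and>
     (\<forall>W. openin (prod_topology K K) W \<and> (\<forall>z\<in>topspace K. (z, z) \<in> W) \<longrightarrow>
        (\<exists>U. openin T U \<and> \<one>\<^bsub>G\<^esub> \<in> U \<and>
             (\<forall>x\<in>carrier G. \<forall>y\<in>carrier G. \<forall>u\<in>U. x = u \<otimes>\<^bsub>G\<^esub> y \<longrightarrow> (j x, j y) \<in> W))) \<and>
     (\<forall>U. openin T U \<and> \<one>\<^bsub>G\<^esub> \<in> U \<longrightarrow>
        (\<exists>W. openin (prod_topology K K) W \<and> (\<forall>z\<in>topspace K. (z, z) \<in> W) \<and>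
             (\<forall>x\<in>carrier G. \<forall>y\<in>carrier G. (j x, j y) \<in> W \<longrightarrow>
                (\<exists>u\<in>U. \<exists>h\<in>H. x = u \<otimes>\<^bsub>G\<^esub> y \<otimes>\<^bsub>G\<^esub> h))))"

definition product_action :: "'i set \<Rightarrow> ('i \<Rightarrow> 'g \<Rightarrow> 'x \<Rightarrow> 'x) \<Rightarrow> ('i \<Rightarrow> 'g) \<Rightarrow> ('i \<Rightarrow> 'x) \<Rightarrow> ('i \<Rightarrow> 'x)" where
  "product_action I act g x = (\<lambda>i\<in>I. act i (g i) (x i))"

end

theory Submission
  imports Defs
begin

lemma flow_transfer:
  assumes fl: "flow G T Z act" and inj: "inj_on \<phi> (topspace Z)"
  defines "\<psi> \<equiv> inv_into (topspace Z) \<phi>"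
  defines "Z' \<equiv> pullback_topology (\<phi> ` topspace Z) \<psi> Z"
  shows "flow G T Z' (\<lambda>g w. \<phi> (act g (\<psi> w)))"
    and "topspace Z' = \<phi> ` topspace Z"
    and "\<And>w. w \<in> topspace Z' \<Longrightarrow> \<psi> w \<in> topspace Z \<and> \<phi> (\<psi> w) = w"
proof -
  have psi_phi: "\<And>x. x \<in> topspace Z \<Longrightarrow> \<psi> (\<phi> x) = x"
    using inj by (simp add: \<psi>_def)
  have tsZ': "topspace Z' = \<phi> ` topspace Z"
    unfolding Z'_def topspace_pullback_topology using psi_phi by auto
  then show "topspace Z' = \<phi> ` topspace Z" .
  show ww: "\<And>w. w \<in> topspace Z' \<Longrightarrow> \<psi> w \<in> topspace Z \<and> \<phi> (\<psi> w) = w"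
    using tsZ' psi_phi by auto
  have c1: "continuous_map Z' Z \<psi>"
    using continuous_map_pullback[OF continuous_map_id, of "\<phi> ` topspace Z" \<psi>]
    by (simp add: Z'_def)
  have c2: "continuous_map Z Z' \<phi>"
    unfolding Z'_def
  proof (rule continuous_map_pullback')
    show "continuous_map Z Z (\<psi> \<circ> \<phi>)"
      by (rule continuous_map_eq[OF continuous_map_id]) (simp add: psi_phi)
  qed auto
  have hm: "homeomorphic_maps Z Z' \<phi> \<psi>"
    unfolding homeomorphic_maps_def using c1 c2 psi_phi ww by blast
  then have hs: "Z homeomorphic_space Z'"
    unfolding homeomorphic_space_def by blast
  have F: "topspace Z \<noteq> {}" "compact_space Z" "Hausdorff_space Z"
     "\<forall>g\<in>carrier G. \<forall>x\<in>topspace Z. act g x \<in> topspace Z"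
     "\<forall>x\<in>topspace Z. act \<one>\<^bsub>G\<^esub> x = x"
     "\<forall>g\<in>carrier G. \<forall>h\<in>carrier G. \<forall>x\<in>topspace Z. act (g \<otimes>\<^bsub>G\<^esub> h) x = act g (act h x)"
     "continuous_map (prod_topology T Z) Z (\<lambda>(g, x). act g x)"
    using fl unfolding flow_def by auto
  have cont: "continuous_map (prod_topology T Z') Z' (\<lambda>(g, w). \<phi> (act g (\<psi> w)))"
  proof -
    have "continuous_map (prod_topology T Z') Z (\<lambda>z. \<psi> (snd z))"
      using continuous_map_compose[OF continuous_map_snd c1] by (simp add: o_def)
    then have "continuous_map (prod_topology T Z') (prod_topology T Z) (\<lambda>z. (fst z, \<psi> (snd z)))"
      by (intro continuous_map_pairedI continuous_map_fst)
    then have "continuous_map (prod_topology T Z') (prod_topology T Z) (\<lambda>(g, w). (g, \<psi> w))"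
      by (simp add: case_prod_unfold)
    then have "continuous_map (prod_topology T Z') Z ((\<lambda>(g, x). act g x) \<circ> (\<lambda>(g, w). (g, \<psi> w)))"
      using F(7) continuous_map_compose by blast
    then have "continuous_map (prod_topology T Z') Z' (\<phi> \<circ> ((\<lambda>(g, x). act g x) \<circ> (\<lambda>(g, w). (g, \<psi> w))))"
      using c2 continuous_map_compose by blast
    then show ?thesis by (simp add: o_def case_prod_unfold)
  qed
  show "flow G T Z' (\<lambda>g w. \<phi> (act g (\<psi> w)))"
    unfolding flow_def
  proof (intro conjI)
    show "topspace Z' \<noteq> {}" using F(1) tsZ' by auto
    show "compact_space Z'" using F(2) homeomorphic_compact_space[OF hs] by simp
    show "Hausdorff_space Z'" using F(3) homeomorphic_Hausdorff_space[OF hs] by simp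
    show "\<forall>g\<in>carrier G. \<forall>x\<in>topspace Z'. \<phi> (act g (\<psi> x)) \<in> topspace Z'"
      using F(4) ww tsZ' by auto
    show "\<forall>x\<in>topspace Z'. \<phi> (act \<one>\<^bsub>G\<^esub> (\<psi> x)) = x"
      using F(5) ww by auto
    show "\<forall>g\<in>carrier G. \<forall>h\<in>carrier G. \<forall>x\<in>topspace Z'.
        \<phi> (act (g \<otimes>\<^bsub>G\<^esub> h) (\<psi> x)) = \<phi> (act g (\<psi> (\<phi> (act h (\<psi> x)))))"
      using F(4,6) ww psi_phi by auto
  qed (rule cont)
qed



lemma EA_dense_orbit:
  fixes G :: "'g monoid" and Z :: "'z topology"
  assumes ea: "extremely_amenable_subgroup G T H"
    and fl: "flow (G\<lparr>carrier := H\<rparr>) (subtopology T H) Z act"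
    and y: "y \<in> topspace Z" and dense: "Z closure_of ((\<lambda>a. act a y) ` H) = topspace Z"
  shows "\<exists>z\<in>topspace Z. \<forall>h\<in>H. act h z = z"
proof -
  define \<phi> :: "'z \<Rightarrow> 'g set set" where
    "\<phi> x = {{a \<in> H. act a y \<in> N} | N. openin Z N \<and> x \<in> N}" for x
  have HS: "Hausdorff_space Z" using fl by (simp add: flow_def)
  have inj: "inj_on \<phi> (topspace Z)"
  proof (rule inj_onI, rule ccontr)
    fix x1 x2 assume x1: "x1 \<in> topspace Z" and x2: "x2 \<in> topspace Z" and eq: "\<phi> x1 = \<phi> x2"
      and ne: "x1 \<noteq> x2"
    obtain N1 N2 where N: "openin Z N1" "openin Z N2" "x1 \<in> N1" "x2 \<in> N2" "disjnt N1 N2"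
      using HS x1 x2 ne unfolding Hausdorff_space_def by blast
    have "{a \<in> H. act a y \<in> N1} \<in> \<phi> x1" using N unfolding \<phi>_def by blast
    then have "{a \<in> H. act a y \<in> N1} \<in> \<phi> x2" using eq by simp
    then obtain N where N': "openin Z N" "x2 \<in> N" "{a \<in> H. act a y \<in> N1} = {a \<in> H. act a y \<in> N}"
      unfolding \<phi>_def by blast
    have "x2 \<in> Z closure_of ((\<lambda>a. act a y) ` H)" using dense x2 by simp
    moreover have "x2 \<in> N \<inter> N2" "openin Z (N \<inter> N2)" using N N' by auto
    ultimately obtain w where "w \<in> (\<lambda>a. act a y) ` H" "w \<in> N \<inter> N2"
      unfolding in_closure_of by blast
    then obtain a where a: "a \<in> H" "act a y \<in> N" "act a y \<in> N2" by auto
    then have "act a y \<in> N1" using N'(3) by blast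
    then show False using a N(5) by (auto simp: disjnt_def)
  qed
  define \<psi> where "\<psi> = inv_into (topspace Z) \<phi>"
  define Z' where "Z' = pullback_topology (\<phi> ` topspace Z) \<psi> Z"
  note tr = flow_transfer[OF fl inj, folded \<psi>_def, folded Z'_def]
  obtain w where w: "w \<in> topspace Z'" "\<forall>h\<in>H. \<phi> (act h (\<psi> w)) = w"
    using ea tr(1) unfolding extremely_amenable_subgroup_def by blast
  have pw: "\<psi> w \<in> topspace Z" "\<phi> (\<psi> w) = w" using tr(3)[OF w(1)] by auto
  have psi_phi: "\<And>x. x \<in> topspace Z \<Longrightarrow> \<psi> (\<phi> x) = x"
    using inj by (simp add: \<psi>_def)
  have cl: "\<And>h. h \<in> H \<Longrightarrow> act h (\<psi> w) \<in> topspace Z"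
    using fl pw(1) unfolding flow_def by auto
  show ?thesis
  proof (intro bexI[of _ "\<psi> w"] ballI)
    fix h assume h: "h \<in> H"
    have "\<psi> (\<phi> (act h (\<psi> w))) = \<psi> w" using w(2) h by simp
    then show "act h (\<psi> w) = \<psi> w" using psi_phi[OF cl[OF h]] by simp
  qed (rule pw(1))
qed



locale ctx =
  fixes I :: "'i set" and G :: "'i \<Rightarrow> 'g monoid" and T :: "'i \<Rightarrow> 'g topology"
    and H :: "'i \<Rightarrow> 'g set"
    and K :: "'i \<Rightarrow> 'x topology" and act :: "'i \<Rightarrow> 'g \<Rightarrow> 'x \<Rightarrow> 'x"
    and j :: "'i \<Rightarrow> 'g \<Rightarrow> 'x"
  assumes grp: "\<And>i. i \<in> I \<Longrightarrow> group (G i)"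
    and tsT: "\<And>i. i \<in> I \<Longrightarrow> topspace (T i) = carrier (G i)"
    and sub: "\<And>i. i \<in> I \<Longrightarrow> subgroup (H i) (G i)"
    and ea: "\<And>i. i \<in> I \<Longrightarrow> extremely_amenable_subgroup (G i) (T i) (H i)"
    and cf: "\<And>i. i \<in> I \<Longrightarrow> completion_flow (G i) (T i) (H i) (K i) (act i) (j i)"
    and mf: "\<And>i. i \<in> I \<Longrightarrow> minimal_flow (G i) (T i) (K i) (act i)"
begin

abbreviation "PG \<equiv> product_group I G"
abbreviation "PT \<equiv> product_topology T I"
abbreviation "PK \<equiv> product_topology K I"
abbreviation "pa \<equiv> product_action I act"

lemma flK: "i \<in> I \<Longrightarrow> flow (G i) (T i) (K i) (act i)"
  using mf by (simp add: minimal_flow_def)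

lemma flK_ne: "i \<in> I \<Longrightarrow> topspace (K i) \<noteq> {}"
  and flK_cpt: "i \<in> I \<Longrightarrow> compact_space (K i)"
  and flK_haus: "i \<in> I \<Longrightarrow> Hausdorff_space (K i)"
  and flK_cl: "i \<in> I \<Longrightarrow> g \<in> carrier (G i) \<Longrightarrow> x \<in> topspace (K i) \<Longrightarrow> act i g x \<in> topspace (K i)"
  and flK_one: "i \<in> I \<Longrightarrow> x \<in> topspace (K i) \<Longrightarrow> act i \<one>\<^bsub>G i\<^esub> x = x"
  and flK_mult: "i \<in> I \<Longrightarrow> g \<in> carrier (G i) \<Longrightarrow> h \<in> carrier (G i) \<Longrightarrow> x \<in> topspace (K i) \<Longrightarrow>
      act i (g \<otimes>\<^bsub>G i\<^esub> h) x = act i g (act i h x)"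
  and flK_cont: "i \<in> I \<Longrightarrow> continuous_map (prod_topology (T i) (K i)) (K i) (\<lambda>(g, x). act i g x)"
  using flK[of i] unfolding flow_def by blast+

lemma group_PG: "group PG" using grp by simp

lemma topspace_PT: "topspace PT = carrier PG"
  unfolding topspace_product_topology carrier_product_group
  by (rule PiE_cong) (simp add: tsT)

lemma pa_apply: "k \<in> I \<Longrightarrow> pa g x k = act k (g k) (x k)"
  by (simp add: product_action_def)

lemma flow_PK: "flow PG PT PK pa"
  unfolding flow_def
proof (intro conjI)
  show "topspace PK \<noteq> {}"
    using flK_ne by (auto simp: PiE_eq_empty_iff)
  show "compact_space PK"
    using flK_cpt by (auto simp: compact_space_product_topology)
  show "Hausdorff_space PK"
    using flK_haus by (auto simp: Hausdorff_space_product_topology)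
  show "\<forall>g\<in>carrier PG. \<forall>x\<in>topspace PK. pa g x \<in> topspace PK"
    using flK_cl by (auto simp: product_action_def PiE_iff)
  show "\<forall>x\<in>topspace PK. pa \<one>\<^bsub>PG\<^esub> x = x"
  proof
    fix x assume x: "x \<in> topspace PK"
    show "pa \<one>\<^bsub>PG\<^esub> x = x"
    proof (rule ext)
      fix k show "pa \<one>\<^bsub>PG\<^esub> x k = x k"
        using x flK_one[of k] by (cases "k \<in> I") (auto simp: product_action_def PiE_iff extensional_def)
    qed
  qed
  show "\<forall>g\<in>carrier PG. \<forall>h\<in>carrier PG. \<forall>x\<in>topspace PK. pa (g \<otimes>\<^bsub>PG\<^esub> h) x = pa g (pa h x)"
  proof (intro ballI ext)
    fix g h x k assume g: "g \<in> carrier PG" and h: "h \<in> carrier PG" and x: "x \<in> topspace PK"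
    show "pa (g \<otimes>\<^bsub>PG\<^esub> h) x k = pa g (pa h x) k"
      using g h x flK_mult[of k] flK_cl[of k] by (cases "k \<in> I") (auto simp: product_action_def PiE_iff)
  qed
  show "continuous_map (prod_topology PT PK) PK (\<lambda>(g, x). pa g x)"
    unfolding continuous_map_componentwise
  proof (intro conjI ballI)
    show "(\<lambda>(g, x). pa g x) ` topspace (prod_topology PT PK) \<subseteq> extensional I"
      by (auto simp: product_action_def)
    fix k assume k: "k \<in> I"
    have c1: "continuous_map (prod_topology PT PK) (T k) (\<lambda>z. fst z k)"
      using continuous_map_compose[OF continuous_map_fst continuous_map_product_projection[OF k]]
      by (simp add: o_def)
    have c2: "continuous_map (prod_topology PT PK) (K k) (\<lambda>z. snd z k)"
      using continuous_map_compose[OF continuous_map_snd continuous_map_product_projection[OF k]]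
      by (simp add: o_def)
    have "continuous_map (prod_topology PT PK) (prod_topology (T k) (K k)) (\<lambda>z. (fst z k, snd z k))"
      using c1 c2 by (rule continuous_map_pairedI)
    then have "continuous_map (prod_topology PT PK) (K k) ((\<lambda>(g, x). act k g x) \<circ> (\<lambda>z. (fst z k, snd z k)))"
      using flK_cont[OF k] continuous_map_compose by blast
    then show "continuous_map (prod_topology PT PK) (K k) (\<lambda>x. (case x of (g, x) \<Rightarrow> pa g x) k)"
      using k by (simp add: o_def case_prod_unfold pa_apply)
  qed
qed

lemma image_PiE_choice:
  assumes "\<And>i. i \<in> I \<Longrightarrow> F i ` A i = B i"
  shows "(\<lambda>g. \<lambda>i\<in>I. F i (g i)) ` PiE I A = PiE I B"
proof
  show "(\<lambda>g. \<lambda>i\<in>I. F i (g i)) ` PiE I A \<subseteq> PiE I B"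
    using assms by (auto simp: PiE_iff) blast
  show "PiE I B \<subseteq> (\<lambda>g. \<lambda>i\<in>I. F i (g i)) ` PiE I A"
  proof
    fix z assume z: "z \<in> PiE I B"
    have "\<forall>i\<in>I. \<exists>a. a \<in> A i \<and> z i = F i a"
      using z assms by (force simp: PiE_iff)
    then obtain c where c: "\<forall>i\<in>I. c i \<in> A i \<and> z i = F i (c i)"
      by metis
    define g where "g = (\<lambda>i\<in>I. c i)"
    have "g \<in> PiE I A" using c by (simp add: g_def)
    moreover have "z = (\<lambda>i\<in>I. F i (g i))"
      using z c by (auto simp: g_def PiE_iff extensional_def)
    ultimately show "z \<in> (\<lambda>g. \<lambda>i\<in>I. F i (g i)) ` PiE I A" by blast
  qed
qed

lemma minimal_PK: "minimal_flow PG PT PK pa"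
  unfolding minimal_flow_def
proof (intro conjI ballI)
  show "flow PG PT PK pa" by (rule flow_PK)
  fix x assume x: "x \<in> topspace PK"
  have "(\<lambda>g. pa g x) ` carrier PG = PiE I (\<lambda>i. (\<lambda>a. act i a (x i)) ` carrier (G i))"
    unfolding product_action_def carrier_product_group
    by (rule image_PiE_choice[where F="\<lambda>i a. act i a (x i)"]) simp
  moreover have "\<And>i. i \<in> I \<Longrightarrow> K i closure_of ((\<lambda>a. act i a (x i)) ` carrier (G i)) = topspace (K i)"
    using mf x by (auto simp: minimal_flow_def PiE_iff)
  ultimately show "PK closure_of (\<lambda>g. pa g x) ` carrier PG = topspace PK"
    by (simp add: closure_of_product_topology cong: PiE_cong)
qed

end


lemma flowD:
  assumes "flow G T X act"
  shows "topspace X \<noteq> {}" "compact_space X" "Hausdorff_space X"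
    "\<And>g x. g \<in> carrier G \<Longrightarrow> x \<in> topspace X \<Longrightarrow> act g x \<in> topspace X"
    "\<And>x. x \<in> topspace X \<Longrightarrow> act \<one>\<^bsub>G\<^esub> x = x"
    "\<And>g h x. g \<in> carrier G \<Longrightarrow> h \<in> carrier G \<Longrightarrow> x \<in> topspace X \<Longrightarrow> act (g \<otimes>\<^bsub>G\<^esub> h) x = act g (act h x)"
    "continuous_map (prod_topology T X) X (\<lambda>(g, x). act g x)"
  using assms unfolding flow_def by auto

context ctx begin

definition emb :: "'i \<Rightarrow> 'g \<Rightarrow> 'i \<Rightarrow> 'g" where
  "emb k a = (\<lambda>i\<in>I. if i = k then a else \<one>\<^bsub>G i\<^esub>)"

lemma emb_carrier: "k \<in> I \<Longrightarrow> a \<in> carrier (G k) \<Longrightarrow> emb k a \<in> carrier PG"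
  using grp by (auto simp: emb_def PiE_iff group.is_monoid monoid.one_closed)

lemma H_carrier: "i \<in> I \<Longrightarrow> H i \<subseteq> carrier (G i)"
  using sub subgroup.subset by blast

lemma H_one: "i \<in> I \<Longrightarrow> \<one>\<^bsub>G i\<^esub> \<in> H i"
  using sub subgroup.one_closed by blast

lemma PiH_carrier: "PiE I H \<subseteq> carrier PG"
  using H_carrier by (auto simp: PiE_iff)

lemma emb_H: "k \<in> I \<Longrightarrow> a \<in> H k \<Longrightarrow> emb k a \<in> PiE I H"
  using H_one by (auto simp: emb_def PiE_iff)

lemma emb_one: "k \<in> I \<Longrightarrow> emb k \<one>\<^bsub>G k\<^esub> = \<one>\<^bsub>PG\<^esub>"
  by (auto simp: emb_def)

lemma emb_mult: "k \<in> I \<Longrightarrow> a \<in> carrier (G k) \<Longrightarrow> b \<in> carrier (G k) \<Longrightarrow>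
   emb k a \<otimes>\<^bsub>PG\<^esub> emb k b = emb k (a \<otimes>\<^bsub>G k\<^esub> b)"
  using grp by (auto simp: emb_def fun_eq_iff group.is_monoid monoid.l_one)

lemma emb_cont: "k \<in> I \<Longrightarrow> continuous_map (T k) PT (emb k)"
  unfolding continuous_map_componentwise
proof (intro conjI ballI)
  show "emb k ` topspace (T k) \<subseteq> extensional I" by (auto simp: emb_def)
  fix i assume i: "i \<in> I" and k: "k \<in> I"
  show "continuous_map (T k) (T i) (\<lambda>x. emb k x i)"
  proof (cases "i = k")
    case True then show ?thesis using i by (simp add: emb_def)
  next
    case False
    have "\<one>\<^bsub>G i\<^esub> \<in> topspace (T i)" using tsT[OF i] grp[OF i] by (simp add: group.is_monoid monoid.one_closed)
    then show ?thesis using False i by (simp add: emb_def)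
  qed
qed

lemma fixset_closed:
  assumes fl: "flow PG PT Y actY" and h: "h \<in> carrier PG"
  shows "closedin Y {y \<in> topspace Y. actY h y = y}"
proof -
  have c: "continuous_map (prod_topology PT Y) Y (\<lambda>(g, x). actY g x)" and HY: "Hausdorff_space Y"
    using fl by (auto simp: flow_def)
  have "continuous_map Y (prod_topology PT Y) (\<lambda>y. (h, y))"
    using h topspace_PT continuous_map_id by (intro continuous_map_pairedI) (simp_all add: id_def)
  then have "continuous_map Y Y ((\<lambda>(g, x). actY g x) \<circ> (\<lambda>y. (h, y)))"
    using c continuous_map_compose by blast
  then have "continuous_map Y Y (actY h)" by (simp add: o_def)
  from closedin_continuous_maps_eq[OF HY this continuous_map_id] show ?thesis by (simp add: id_def)
qed

lemma orbitmap_cont: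
  assumes fl: "flow PG PT Y actY" and y: "y \<in> topspace Y"
  shows "continuous_map PT Y (\<lambda>g. actY g y)"
proof -
  have c: "continuous_map (prod_topology PT Y) Y (\<lambda>(g, x). actY g x)"
    using fl by (auto simp: flow_def)
  have "continuous_map PT (prod_topology PT Y) (\<lambda>g. (g, y))"
    using y continuous_map_id by (intro continuous_map_pairedI) (simp_all add: id_def)
  then have "continuous_map PT Y ((\<lambda>(g, x). actY g x) \<circ> (\<lambda>g. (g, y)))"
    using c continuous_map_compose by blast
  then show ?thesis by (simp add: o_def)
qed

lemma fix_step:
  assumes fl: "flow PG PT Y actY" and k: "k \<in> I" and kJ: "k \<notin> J"
    and y: "y \<in> topspace Y"
    and yfix: "\<forall>h\<in>PiE I H. (\<forall>i\<in>I - J. h i = \<one>\<^bsub>G i\<^esub>) \<longrightarrow> actY h y = y"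
  shows "\<exists>z\<in>topspace Y. \<forall>h\<in>PiE I H. (\<forall>i\<in>I - insert k J. h i = \<one>\<^bsub>G i\<^esub>) \<longrightarrow> actY h z = z"
proof -
  have Fne: "topspace Y \<noteq> {}" and Fcpt: "compact_space Y" and FH: "Hausdorff_space Y"
    and Fcl: "\<And>g x. g \<in> carrier PG \<Longrightarrow> x \<in> topspace Y \<Longrightarrow> actY g x \<in> topspace Y"
    and Fone: "\<And>x. x \<in> topspace Y \<Longrightarrow> actY \<one>\<^bsub>PG\<^esub> x = x"
    and Fmult: "\<And>g h x. g \<in> carrier PG \<Longrightarrow> h \<in> carrier PG \<Longrightarrow> x \<in> topspace Y \<Longrightarrow> actY (g \<otimes>\<^bsub>PG\<^esub> h) x = actY g (actY h x)"
    and Fcont: "continuous_map (prod_topology PT Y) Y (\<lambda>(g, x). actY g x)"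
    by (fact flowD[OF fl])+
  have gk: "group (G k)" using grp k by blast
  have Hk: "H k \<subseteq> carrier (G k)" using H_carrier k by blast
  define Orb where "Orb = (\<lambda>a. actY (emb k a) y) ` H k"
  define Ocl where "Ocl = Y closure_of Orb"
  define FJ where "FJ = {x \<in> topspace Y. \<forall>h\<in>PiE I H. (\<forall>i\<in>I - J. h i = \<one>\<^bsub>G i\<^esub>) \<longrightarrow> actY h x = x}"
  have Orb_sub: "Orb \<subseteq> topspace Y"
    using Fcl emb_carrier k Hk y by (auto simp: Orb_def)
  have O_sub: "Ocl \<subseteq> topspace Y" by (simp add: Ocl_def closure_of_subset_topspace)
  have Orb_O: "Orb \<subseteq> Ocl" using Orb_sub by (simp add: Ocl_def closure_of_subset)
  have yO: "y \<in> Ocl"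
  proof -
    have "actY (emb k \<one>\<^bsub>G k\<^esub>) y \<in> Orb" using H_one[OF k] by (auto simp: Orb_def)
    then show ?thesis using emb_one[OF k] Fone[OF y] Orb_O by auto
  qed
  have act_emb_O: "actY (emb k a) x \<in> Ocl" if a: "a \<in> H k" and x: "x \<in> Ocl" for a x
  proof -
    have ce: "emb k a \<in> carrier PG" using emb_carrier k a Hk by blast
    have "continuous_map Y Y (actY (emb k a))"
    proof -
      have "continuous_map Y (prod_topology PT Y) (\<lambda>y. (emb k a, y))"
        using ce topspace_PT continuous_map_id by (intro continuous_map_pairedI) (simp_all add: id_def)
      then have "continuous_map Y Y ((\<lambda>(g, x). actY g x) \<circ> (\<lambda>y. (emb k a, y)))"
        using Fcont continuous_map_compose by blast
      then show ?thesis by (simp add: o_def)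
    qed
    then have s1: "actY (emb k a) ` Ocl \<subseteq> Y closure_of (actY (emb k a) ` Orb)"
      unfolding Ocl_def by (rule continuous_map_image_closure_subset)
    have s2: "actY (emb k a) ` Orb \<subseteq> Orb"
    proof
      fix w assume "w \<in> actY (emb k a) ` Orb"
      then obtain b where b: "b \<in> H k" "w = actY (emb k a) (actY (emb k b) y)" by (auto simp: Orb_def)
      have bc: "b \<in> carrier (G k)" "a \<in> carrier (G k)" using b a Hk by auto
      have "w = actY (emb k (a \<otimes>\<^bsub>G k\<^esub> b)) y"
        using b(2) Fmult[OF ce emb_carrier[OF k bc(1)] y] emb_mult[OF k bc(2) bc(1)] by metis
      moreover have "a \<otimes>\<^bsub>G k\<^esub> b \<in> H k" by (rule subgroup.m_closed[OF sub[OF k] a b(1)])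
      ultimately show "w \<in> Orb" by (auto simp: Orb_def)
    qed
    have "Y closure_of (actY (emb k a) ` Orb) \<subseteq> Ocl" unfolding Ocl_def by (rule closure_of_mono[OF s2])
    then show ?thesis using x s1 by blast
  qed
  define Z where "Z = subtopology Y Ocl"
  have tsZ: "topspace Z = Ocl" using O_sub by (simp add: Z_def Int_absorb1)
  have flZ: "flow (G k\<lparr>carrier := H k\<rparr>) (subtopology (T k) (H k)) Z (\<lambda>a z. actY (emb k a) z)"
    unfolding flow_def
  proof (intro conjI ballI)
    show "topspace Z \<noteq> {}" using yO tsZ by auto
    show "compact_space Z"
      unfolding Z_def Ocl_def by (rule compact_space_subtopology, rule closedin_compact_space[OF Fcpt]) simp
    show "Hausdorff_space Z" using FH by (simp add: Z_def Hausdorff_space_subtopology)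
    show "actY (emb k g) x \<in> topspace Z" if "g \<in> carrier (G k\<lparr>carrier := H k\<rparr>)" "x \<in> topspace Z" for g x
      using that act_emb_O tsZ by simp
    show "actY (emb k \<one>\<^bsub>G k\<lparr>carrier := H k\<rparr>\<^esub>) x = x" if "x \<in> topspace Z" for x
      using that tsZ O_sub emb_one[OF k] Fone by auto
    show "actY (emb k (g \<otimes>\<^bsub>G k\<lparr>carrier := H k\<rparr>\<^esub> h)) x = actY (emb k g) (actY (emb k h) x)"
      if "g \<in> carrier (G k\<lparr>carrier := H k\<rparr>)" "h \<in> carrier (G k\<lparr>carrier := H k\<rparr>)" "x \<in> topspace Z" for g h x
      using that tsZ O_sub Hk Fmult[OF emb_carrier[OF k] emb_carrier[OF k], of g h x] emb_mult[OF k, of g h] by auto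
    show "continuous_map (prod_topology (subtopology (T k) (H k)) Z) Z (\<lambda>(g, x). actY (emb k g) x)"
      unfolding Z_def
    proof (rule continuous_map_into_subtopology)
      have c1: "continuous_map (prod_topology (subtopology (T k) (H k)) (subtopology Y Ocl)) PT (\<lambda>z. emb k (fst z))"
        using continuous_map_compose[OF continuous_map_compose[OF continuous_map_fst continuous_map_from_subtopology[OF continuous_map_id]] emb_cont[OF k]]
        by (simp add: o_def)
      have c2: "continuous_map (prod_topology (subtopology (T k) (H k)) (subtopology Y Ocl)) Y (\<lambda>z. snd z)"
        using continuous_map_compose[OF continuous_map_snd continuous_map_from_subtopology[OF continuous_map_id]]
        by (simp add: o_def)
      have "continuous_map (prod_topology (subtopology (T k) (H k)) (subtopology Y Ocl)) (prod_topology PT Y) (\<lambda>z. (emb k (fst z), snd z))"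
        using c1 c2 by (rule continuous_map_pairedI)
      then have "continuous_map (prod_topology (subtopology (T k) (H k)) (subtopology Y Ocl)) Y ((\<lambda>(g, x). actY g x) \<circ> (\<lambda>z. (emb k (fst z), snd z)))"
        using Fcont continuous_map_compose by blast
      then show "continuous_map (prod_topology (subtopology (T k) (H k)) (subtopology Y Ocl)) Y (\<lambda>(g, x). actY (emb k g) x)"
        by (simp add: o_def case_prod_unfold)
      show "(\<lambda>(g, x). actY (emb k g) x) \<in> topspace (prod_topology (subtopology (T k) (H k)) (subtopology Y Ocl)) \<rightarrow> Ocl"
        using act_emb_O by auto
    qed
  qed
  have dense: "Z closure_of ((\<lambda>a. actY (emb k a) y) ` H k) = topspace Z"
  proof -
    have "Z closure_of Orb = Ocl \<inter> (Y closure_of (Ocl \<inter> Orb))"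
      unfolding Z_def by (rule closure_of_subtopology)
    also have "\<dots> = Ocl" using Orb_O by (simp add: Int_absorb1 Ocl_def)
    finally show ?thesis using tsZ by (simp add: Orb_def)
  qed
  obtain z where z: "z \<in> Ocl" "\<forall>a\<in>H k. actY (emb k a) z = z"
    using EA_dense_orbit[OF ea[OF k] flZ _ dense] yO tsZ by auto
  have FJ_closed: "closedin Y FJ"
  proof -
    define S where "S = {h \<in> PiE I H. \<forall>i\<in>I - J. h i = \<one>\<^bsub>G i\<^esub>}"
    have "\<one>\<^bsub>PG\<^esub> \<in> S" using H_one by (auto simp: S_def)
    have "FJ = topspace Y \<inter> \<Inter> ((\<lambda>h. {x \<in> topspace Y. actY h x = x}) ` S)"
      by (auto simp: FJ_def S_def)
    moreover have "closedin Y (\<Inter> ((\<lambda>h. {x \<in> topspace Y. actY h x = x}) ` S))"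
    proof (rule closedin_Inter)
      show "(\<lambda>h. {x \<in> topspace Y. actY h x = x}) ` S \<noteq> {}" using \<open>\<one>\<^bsub>PG\<^esub> \<in> S\<close> by blast
      show "\<And>C. C \<in> (\<lambda>h. {x \<in> topspace Y. actY h x = x}) ` S \<Longrightarrow> closedin Y C"
        using PiH_carrier by (auto simp: S_def intro!: fixset_closed[OF fl])
    qed
    ultimately show ?thesis by (simp add: closedin_Int)
  qed
  have Orb_FJ: "Orb \<subseteq> FJ"
  proof
    fix w assume "w \<in> Orb"
    then obtain a where a: "a \<in> H k" "w = actY (emb k a) y" by (auto simp: Orb_def)
    have ce: "emb k a \<in> carrier PG" using emb_carrier k a Hk by blast
    show "w \<in> FJ" unfolding FJ_def
    proof (intro CollectI conjI ballI impI)
      show "w \<in> topspace Y" using a Orb_sub \<open>w \<in> Orb\<close> by auto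
      fix h assume h: "h \<in> PiE I H" and hJ: "\<forall>i\<in>I - J. h i = \<one>\<^bsub>G i\<^esub>"
      have hc: "h \<in> carrier PG" using h PiH_carrier by blast
      have comm: "h \<otimes>\<^bsub>PG\<^esub> emb k a = emb k a \<otimes>\<^bsub>PG\<^esub> h"
      proof (rule ext)
        fix i show "(h \<otimes>\<^bsub>PG\<^esub> emb k a) i = (emb k a \<otimes>\<^bsub>PG\<^esub> h) i"
        proof (cases "i \<in> I")
          case True
          have gi: "group (G i)" using grp True by blast
          have "h i \<in> carrier (G i)" using hc True by auto
          then show ?thesis using True hJ kJ a Hk gi k
            by (auto simp: emb_def group.is_monoid monoid.l_one monoid.r_one)
        qed simp
      qed
      have "actY h w = actY (h \<otimes>\<^bsub>PG\<^esub> emb k a) y" using Fmult[OF hc ce y] a by simp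
      also have "\<dots> = actY (emb k a) (actY h y)" using comm Fmult[OF ce hc y] by simp
      also have "\<dots> = w" using yfix h hJ a by simp
      finally show "actY h w = w" .
    qed
  qed
  have O_FJ: "Ocl \<subseteq> FJ"
    unfolding Ocl_def using Orb_FJ FJ_closed closure_of_minimal by blast
  show ?thesis
  proof (intro bexI[of _ z] ballI impI)
    show "z \<in> topspace Y" using z O_sub by auto
    fix h assume h: "h \<in> PiE I H" and hJ: "\<forall>i\<in>I - insert k J. h i = \<one>\<^bsub>G i\<^esub>"
    define h' where "h' = (\<lambda>i\<in>I. if i = k then \<one>\<^bsub>G i\<^esub> else h i)"
    have hk: "h k \<in> H k" using h k by auto
    have h'H: "h' \<in> PiE I H" using h H_one by (auto simp: h'_def PiE_iff)
    have h'J: "\<forall>i\<in>I - J. h' i = \<one>\<^bsub>G i\<^esub>" using hJ by (auto simp: h'_def)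
    have dec: "h = h' \<otimes>\<^bsub>PG\<^esub> emb k (h k)"
    proof (rule ext)
      fix i show "h i = (h' \<otimes>\<^bsub>PG\<^esub> emb k (h k)) i"
      proof (cases "i \<in> I")
        case True
        have gi: "group (G i)" using grp True by blast
        have "h i \<in> carrier (G i)" using h H_carrier True by auto
        then show ?thesis using True gi
          by (auto simp: emb_def h'_def group.is_monoid monoid.l_one monoid.r_one)
      next
        case False then show ?thesis using h by (auto simp: PiE_iff extensional_def)
      qed
    qed
    have zFJ: "z \<in> FJ" using z O_FJ by auto
    have "actY h z = actY h' (actY (emb k (h k)) z)"
      using dec Fmult[OF _ emb_carrier[OF k] , of h' "h k" z] h'H PiH_carrier hk Hk z O_sub
      by (metis in_mono)
    also have "\<dots> = actY h' z" using z hk by simp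
    also have "\<dots> = z" using zFJ h'H h'J by (auto simp: FJ_def)
    finally show "actY h z = z" .
  qed
qed

lemma Fx_closed:
  assumes fl: "flow PG PT Y actY"
  shows "closedin Y {x \<in> topspace Y. \<forall>h\<in>PiE I H. (\<forall>i\<in>I - J. h i = \<one>\<^bsub>G i\<^esub>) \<longrightarrow> actY h x = x}"
proof -
  define S where "S = {h \<in> PiE I H. \<forall>i\<in>I - J. h i = \<one>\<^bsub>G i\<^esub>}"
  have "\<one>\<^bsub>PG\<^esub> \<in> S" using H_one by (auto simp: S_def)
  have "{x \<in> topspace Y. \<forall>h\<in>PiE I H. (\<forall>i\<in>I - J. h i = \<one>\<^bsub>G i\<^esub>) \<longrightarrow> actY h x = x}
        = topspace Y \<inter> \<Inter> ((\<lambda>h. {x \<in> topspace Y. actY h x = x}) ` S)"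
    by (auto simp: S_def)
  moreover have "closedin Y (\<Inter> ((\<lambda>h. {x \<in> topspace Y. actY h x = x}) ` S))"
  proof (rule closedin_Inter)
    show "(\<lambda>h. {x \<in> topspace Y. actY h x = x}) ` S \<noteq> {}" using \<open>\<one>\<^bsub>PG\<^esub> \<in> S\<close> by blast
    show "\<And>C. C \<in> (\<lambda>h. {x \<in> topspace Y. actY h x = x}) ` S \<Longrightarrow> closedin Y C"
      using PiH_carrier by (auto simp: S_def intro!: fixset_closed[OF fl])
  qed
  ultimately show ?thesis by (simp add: closedin_Int)
qed

lemma product_fixed_point:
  assumes fl: "flow PG PT Y actY"
  shows "\<exists>y\<in>topspace Y. \<forall>h\<in>PiE I H. actY h y = y"
proof -
  define Fx where "Fx J = {x \<in> topspace Y. \<forall>h\<in>PiE I H. (\<forall>i\<in>I - J. h i = \<one>\<^bsub>G i\<^esub>) \<longrightarrow> actY h x = x}" for J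
  have cl: "closedin Y (Fx J)" for J unfolding Fx_def by (rule Fx_closed[OF fl])
  have anti: "J1 \<subseteq> J2 \<Longrightarrow> Fx J2 \<subseteq> Fx J1" for J1 J2 unfolding Fx_def by blast
  have ne: "finite J \<Longrightarrow> J \<subseteq> I \<Longrightarrow> Fx J \<noteq> {}" for J
  proof (induction J rule: finite_induct)
    case empty
    have "Fx {} = topspace Y"
    proof -
      have "h = \<one>\<^bsub>PG\<^esub>" if "h \<in> PiE I H" "\<forall>i\<in>I. h i = \<one>\<^bsub>G i\<^esub>" for h
        using that by (auto simp: PiE_iff extensional_def)
      then show ?thesis using flowD(5)[OF fl] by (auto simp: Fx_def)
    qed
    then show ?case using flowD(1)[OF fl] by simp
  next
    case (insert k J)
    then obtain y where "y \<in> Fx J" by auto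
    then have "y \<in> topspace Y" "\<forall>h\<in>PiE I H. (\<forall>i\<in>I - J. h i = \<one>\<^bsub>G i\<^esub>) \<longrightarrow> actY h y = y"
      by (auto simp: Fx_def)
    from fix_step[OF fl _ insert(2) this] insert(4) show ?case unfolding Fx_def by blast
  qed
  define U where "U = Fx ` {J. finite J \<and> J \<subseteq> I}"
  have fip: "\<forall>\<U>. (\<forall>C\<in>\<U>. closedin Y C) \<and> (\<forall>\<F>. finite \<F> \<and> \<F> \<subseteq> \<U> \<longrightarrow> \<Inter>\<F> \<noteq> {}) \<longrightarrow> \<Inter>\<U> \<noteq> {}"
    using compact_space_fip flowD(2)[OF fl] by blast
  have c1: "\<forall>C\<in>U. closedin Y C" using cl by (auto simp: U_def)
  have c2: "\<forall>F. finite F \<and> F \<subseteq> U \<longrightarrow> \<Inter>F \<noteq> {}"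
  proof (intro allI impI)
    fix F assume F: "finite F \<and> F \<subseteq> U"
    then obtain Js where Js: "Js \<subseteq> {J. finite J \<and> J \<subseteq> I}" "finite Js" "F = Fx ` Js"
      unfolding U_def by (meson finite_subset_image)
    have "Fx (\<Union>Js) \<subseteq> \<Inter>F" using Js anti[of _ "\<Union>Js"] by blast
    moreover have "Fx (\<Union>Js) \<noteq> {}" using Js by (intro ne) auto
    ultimately show "\<Inter>F \<noteq> {}" by blast
  qed
  have "\<Inter>U \<noteq> {}" using fip c1 c2 by blast
  then obtain y where y: "y \<in> \<Inter>U" by blast
  have yF: "y \<in> Fx J" if "finite J" "J \<subseteq> I" for J using y that by (auto simp: U_def)
  have yt: "y \<in> topspace Y" using yF[of "{}"] by (auto simp: Fx_def)
  show ?thesis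
  proof (intro bexI[OF _ yt] ballI, rule ccontr)
    fix h assume h: "h \<in> PiE I H" and nfix: "actY h y \<noteq> y"
    define C where "C = {g \<in> topspace PT. actY g y = y}"
    have "closedin PT C" unfolding C_def
      using closedin_continuous_maps_eq[OF flowD(3)[OF fl] orbitmap_cont[OF fl yt], of "\<lambda>g. y"] yt
      by simp
    then have op: "openin PT (topspace PT - C)" by (meson closedin_def)
    have hin: "h \<in> topspace PT - C" using h PiH_carrier topspace_PT nfix by (auto simp: C_def)
    obtain V where V: "finite {i \<in> I. V i \<noteq> topspace (T i)}" "\<forall>i\<in>I. openin (T i) (V i)"
      "h \<in> PiE I V" "PiE I V \<subseteq> topspace PT - C"
      using op[unfolded openin_product_topology_alt, rule_format, OF hin] by blast
    define J where "J = {i \<in> I. V i \<noteq> topspace (T i)}"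
    define h' where "h' = (\<lambda>i\<in>I. if i \<in> J then h i else \<one>\<^bsub>G i\<^esub>)"
    have h'H: "h' \<in> PiE I H" using h H_one by (auto simp: h'_def PiE_iff)
    have h'V: "h' \<in> PiE I V"
    proof -
      have "\<one>\<^bsub>G i\<^esub> \<in> V i" if "i \<in> I" "i \<notin> J" for i
        using that tsT grp by (auto simp: J_def group.is_monoid monoid.one_closed)
      then show ?thesis using h V(3) by (auto simp: h'_def PiE_iff)
    qed
    have fJ: "finite J" "J \<subseteq> I" using V(1) by (auto simp: J_def)
    have sup: "\<forall>i\<in>I - J. h' i = \<one>\<^bsub>G i\<^esub>" by (simp add: h'_def)
    have "actY h' y = y" using yF[OF fJ] h'H sup unfolding Fx_def by blast
    moreover have "h' \<in> topspace PT" using h'H PiH_carrier topspace_PT by auto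
    ultimately have "h' \<in> C" by (simp add: C_def)
    then show False using h'V V(4) by blast
  qed
qed

end


context ctx begin

definition jj :: "('i \<Rightarrow> 'g) \<Rightarrow> ('i \<Rightarrow> 'x)" where
  "jj g = (\<lambda>i\<in>I. j i (g i))"

lemma cf_j: "i \<in> I \<Longrightarrow> a \<in> carrier (G i) \<Longrightarrow> j i a \<in> topspace (K i)"
  and cf_eqv: "i \<in> I \<Longrightarrow> g \<in> carrier (G i) \<Longrightarrow> a \<in> carrier (G i) \<Longrightarrow> act i g (j i a) = j i (g \<otimes>\<^bsub>G i\<^esub> a)"
  and cf_dense: "i \<in> I \<Longrightarrow> K i closure_of (j i ` carrier (G i)) = topspace (K i)"
  and cf_unif: "i \<in> I \<Longrightarrow> openin (T i) U \<Longrightarrow> \<one>\<^bsub>G i\<^esub> \<in> U \<Longrightarrow>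
        (\<exists>W. openin (prod_topology (K i) (K i)) W \<and> (\<forall>z\<in>topspace (K i). (z, z) \<in> W) \<and>
             (\<forall>x\<in>carrier (G i). \<forall>y\<in>carrier (G i). (j i x, j i y) \<in> W \<longrightarrow>
                (\<exists>u\<in>U. \<exists>h\<in>H i. x = u \<otimes>\<^bsub>G i\<^esub> y \<otimes>\<^bsub>G i\<^esub> h)))"
proof -
  assume i: "i \<in> I"
  note C = cf[OF i, unfolded completion_flow_def]
  note c2 = C[THEN conjunct2, THEN conjunct1]
  note c4 = C[THEN conjunct2, THEN conjunct2, THEN conjunct2, THEN conjunct1]
  note c5 = C[THEN conjunct2, THEN conjunct2, THEN conjunct2, THEN conjunct2, THEN conjunct1]
  note c7 = C[THEN conjunct2, THEN conjunct2, THEN conjunct2, THEN conjunct2, THEN conjunct2, THEN conjunct2]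
  show "a \<in> carrier (G i) \<Longrightarrow> j i a \<in> topspace (K i)" using c2 by (rule funcset_mem)
  show "g \<in> carrier (G i) \<Longrightarrow> a \<in> carrier (G i) \<Longrightarrow> act i g (j i a) = j i (g \<otimes>\<^bsub>G i\<^esub> a)"
    using c4 by blast
  show "K i closure_of (j i ` carrier (G i)) = topspace (K i)" by (rule c5)
  show "openin (T i) U \<Longrightarrow> \<one>\<^bsub>G i\<^esub> \<in> U \<Longrightarrow>
        (\<exists>W. openin (prod_topology (K i) (K i)) W \<and> (\<forall>z\<in>topspace (K i). (z, z) \<in> W) \<and>
             (\<forall>x\<in>carrier (G i). \<forall>y\<in>carrier (G i). (j i x, j i y) \<in> W \<longrightarrow>
                (\<exists>u\<in>U. \<exists>h\<in>H i. x = u \<otimes>\<^bsub>G i\<^esub> y \<otimes>\<^bsub>G i\<^esub> h)))"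
    using c7 by (elim allE impE) (rule conjI)
qed

lemma jj_carrier: "g \<in> carrier PG \<Longrightarrow> jj g \<in> topspace PK"
  using cf_j by (auto simp: jj_def PiE_iff)

lemma jj_dense: "PK closure_of (jj ` carrier PG) = topspace PK"
proof -
  have "jj ` carrier PG = PiE I (\<lambda>i. j i ` carrier (G i))"
    unfolding jj_def carrier_product_group
    by (rule image_PiE_choice) simp
  then show ?thesis using cf_dense by (simp add: closure_of_product_topology cong: PiE_cong)
qed

lemma graph_unique:
  assumes fl: "flow PG PT Y actY" and y0: "y0 \<in> topspace Y"
    and fix0: "\<forall>h\<in>PiE I H. actY h y0 = y0"
    and m1: "(x, y1) \<in> prod_topology PK Y closure_of ((\<lambda>g. (jj g, actY g y0)) ` carrier PG)"
    and m2: "(x, y2) \<in> prod_topology PK Y closure_of ((\<lambda>g. (jj g, actY g y0)) ` carrier PG)"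
  shows "y1 = y2"
proof (rule ccontr)
  assume ne: "y1 \<noteq> y2"
  define S where "S = (\<lambda>g. (jj g, actY g y0)) ` carrier PG"
  note F = flowD[OF fl]
  have "prod_topology PK Y closure_of ((\<lambda>g. (jj g, actY g y0)) ` carrier PG) \<subseteq> topspace PK \<times> topspace Y"
    using closure_of_subset_topspace[of "prod_topology PK Y"] by (simp only: topspace_prod_topology)
  then have xy: "x \<in> topspace PK" "y1 \<in> topspace Y" "y2 \<in> topspace Y"
    using m1 m2 by blast+
  obtain V1 V2 where V: "openin Y V1" "openin Y V2" "y1 \<in> V1" "y2 \<in> V2" "disjnt V1 V2"
    using F(3) xy ne unfolding Hausdorff_space_def by blast
  have onec: "\<one>\<^bsub>PG\<^esub> \<in> carrier PG" using group_PG group.is_monoid monoid.one_closed by blast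
  have nb: "\<exists>U V'. openin PT U \<and> openin Y V' \<and> \<one>\<^bsub>PG\<^esub> \<in> U \<and> y \<in> V' \<and>
            (\<forall>g\<in>U. \<forall>z\<in>V'. actY g z \<in> V)"
    if "openin Y V" "y \<in> V" "y \<in> topspace Y" for V y
  proof -
    have op: "openin (prod_topology PT Y) {z \<in> topspace (prod_topology PT Y). (\<lambda>(g, x). actY g x) z \<in> V}"
      by (rule openin_continuous_map_preimage[OF F(7) that(1)])
    have mem: "(\<one>\<^bsub>PG\<^esub>, y) \<in> {z \<in> topspace (prod_topology PT Y). (\<lambda>(g, x). actY g x) z \<in> V}"
    proof -
      have "actY \<one>\<^bsub>PG\<^esub> y = y" using F(5) that(3) by blast
      moreover have "(\<one>\<^bsub>PG\<^esub>, y) \<in> topspace (prod_topology PT Y)"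
        using that(3) onec topspace_PT by (simp only: topspace_prod_topology mem_Times_iff fst_conv snd_conv) 
      ultimately show ?thesis using that(2) by simp
    qed
    obtain U V' where "openin PT U" "openin Y V'" "\<one>\<^bsub>PG\<^esub> \<in> U" "y \<in> V'"
      "U \<times> V' \<subseteq> {z \<in> topspace (prod_topology PT Y). (\<lambda>(g, x). actY g x) z \<in> V}"
      using openin_prod_topology_alt[THEN iffD1, OF op, rule_format, OF mem] by blast
    then show ?thesis by (intro exI[of _ U] exI[of _ V']) auto
  qed
  obtain U1 V1' where U1: "openin PT U1" "openin Y V1'" "\<one>\<^bsub>PG\<^esub> \<in> U1" "y1 \<in> V1'"
      "\<forall>g\<in>U1. \<forall>z\<in>V1'. actY g z \<in> V1"
    using nb[OF V(1) V(3) xy(2)] by blast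
  obtain U2 V2' where U2: "openin PT U2" "openin Y V2'" "\<one>\<^bsub>PG\<^esub> \<in> U2" "y2 \<in> V2'"
      "\<forall>g\<in>U2. \<forall>z\<in>V2'. actY g z \<in> V2"
    using nb[OF V(2) V(4) xy(3)] by blast
  have o12: "openin PT (U1 \<inter> U2)" using U1 U2 by auto
  have i12: "\<one>\<^bsub>PG\<^esub> \<in> U1 \<inter> U2" using U1 U2 by auto
  obtain B where B: "finite {i \<in> I. B i \<noteq> topspace (T i)}" "\<forall>i\<in>I. openin (T i) (B i)"
      "\<one>\<^bsub>PG\<^esub> \<in> PiE I B" "PiE I B \<subseteq> U1 \<inter> U2"
    using openin_product_topology_alt[of T I "U1 \<inter> U2", THEN iffD1, OF o12, rule_format, OF i12] by blast
  define J where "J = {i \<in> I. B i \<noteq> topspace (T i)}"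
  have Nex: "\<forall>i\<in>J. \<exists>N. openin (K i) N \<and> x i \<in> N \<and>
      (\<forall>a\<in>carrier (G i). \<forall>b\<in>carrier (G i). j i a \<in> N \<and> j i b \<in> N \<longrightarrow>
         (\<exists>u\<in>B i. \<exists>h\<in>H i. a = u \<otimes>\<^bsub>G i\<^esub> b \<otimes>\<^bsub>G i\<^esub> h))"
  proof
    fix i assume i: "i \<in> J"
    have iI: "i \<in> I" using i by (simp add: J_def)
    have "\<one>\<^bsub>G i\<^esub> \<in> B i" using B(3) iI by (auto simp: PiE_iff)
    then obtain W where W: "openin (prod_topology (K i) (K i)) W" "\<forall>z\<in>topspace (K i). (z, z) \<in> W"
        "\<forall>a\<in>carrier (G i). \<forall>b\<in>carrier (G i). (j i a, j i b) \<in> W \<longrightarrow>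
                (\<exists>u\<in>B i. \<exists>h\<in>H i. a = u \<otimes>\<^bsub>G i\<^esub> b \<otimes>\<^bsub>G i\<^esub> h)"
      using cf_unif[OF iI B(2)[rule_format, OF iI]] by blast
    have xx: "(x i, x i) \<in> W" using W(2) xy(1) iI by (auto simp: PiE_iff)
    obtain A A' where A: "openin (K i) A" "openin (K i) A'" "x i \<in> A" "x i \<in> A'" "A \<times> A' \<subseteq> W"
      using openin_prod_topology_alt[THEN iffD1, OF W(1), rule_format, OF xx] by blast
    show "\<exists>N. openin (K i) N \<and> x i \<in> N \<and>
      (\<forall>a\<in>carrier (G i). \<forall>b\<in>carrier (G i). j i a \<in> N \<and> j i b \<in> N \<longrightarrow>
         (\<exists>u\<in>B i. \<exists>h\<in>H i. a = u \<otimes>\<^bsub>G i\<^esub> b \<otimes>\<^bsub>G i\<^esub> h))"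
    proof (intro exI[of _ "A \<inter> A'"] conjI ballI impI)
      show "openin (K i) (A \<inter> A')" using A by auto
      show "x i \<in> A \<inter> A'" using A by auto
      fix a b assume ab: "a \<in> carrier (G i)" "b \<in> carrier (G i)" "j i a \<in> A \<inter> A' \<and> j i b \<in> A \<inter> A'"
      then have "(j i a, j i b) \<in> W" using A(5) by blast
      then show "\<exists>u\<in>B i. \<exists>h\<in>H i. a = u \<otimes>\<^bsub>G i\<^esub> b \<otimes>\<^bsub>G i\<^esub> h" using W(3) ab(1,2) by blast
    qed
  qed
  from bchoice[OF Nex] obtain N where N0: "\<forall>i\<in>J. openin (K i) (N i) \<and> x i \<in> N i \<and>
      (\<forall>a\<in>carrier (G i). \<forall>b\<in>carrier (G i). j i a \<in> N i \<and> j i b \<in> N i \<longrightarrow>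
         (\<exists>u\<in>B i. \<exists>h\<in>H i. a = u \<otimes>\<^bsub>G i\<^esub> b \<otimes>\<^bsub>G i\<^esub> h))"
    by blast
  have N: "\<And>i. i \<in> J \<Longrightarrow> openin (K i) (N i) \<and> x i \<in> N i \<and>
      (\<forall>a\<in>carrier (G i). \<forall>b\<in>carrier (G i). j i a \<in> N i \<and> j i b \<in> N i \<longrightarrow>
         (\<exists>u\<in>B i. \<exists>h\<in>H i. a = u \<otimes>\<^bsub>G i\<^esub> b \<otimes>\<^bsub>G i\<^esub> h))"
    using N0 by blast
  define NN where "NN = PiE I (\<lambda>i. if i \<in> J then N i else topspace (K i))"
  have NNo: "openin PK NN"
  proof -
    have "{i \<in> I. (if i \<in> J then N i else topspace (K i)) \<noteq> topspace (K i)} \<subseteq> J" by auto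
    moreover have "finite J" using B(1) by (simp add: J_def)
    ultimately have fin: "finite {i \<in> I. (if i \<in> J then N i else topspace (K i)) \<noteq> topspace (K i)}"
      by (rule finite_subset)
    have "\<forall>i\<in>I. openin (K i) (if i \<in> J then N i else topspace (K i))"
      using N by simp
    then show ?thesis unfolding NN_def openin_PiE_gen using fin by blast
  qed
  have xNN: "x \<in> NN" using xy(1) N by (auto simp: NN_def PiE_iff)
  have pick: "\<exists>g\<in>carrier PG. jj g \<in> NN \<and> actY g y0 \<in> V'"
    if m: "(x, y) \<in> prod_topology PK Y closure_of S" and V': "openin Y V'" "y \<in> V'" for y V'
  proof -
    have "openin (prod_topology PK Y) (NN \<times> V')" using NNo V' by (simp add: openin_prod_Times_iff)
    moreover have "(x, y) \<in> NN \<times> V'" using xNN V' by simp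
    ultimately obtain w where "w \<in> S" "w \<in> NN \<times> V'"
      using m[unfolded in_closure_of, THEN conjunct2, rule_format, of "NN \<times> V'"] by blast
    then show ?thesis by (auto simp: S_def)
  qed
  obtain g where g: "g \<in> carrier PG" "jj g \<in> NN" "actY g y0 \<in> V1'"
    using pick[OF m1[folded S_def] U1(2,4)] by blast
  obtain g' where g': "g' \<in> carrier PG" "jj g' \<in> NN" "actY g' y0 \<in> V2'"
    using pick[OF m2[folded S_def] U2(2,4)] by blast
  have dec: "\<exists>u\<in>B i. \<exists>h\<in>H i. g i = u \<otimes>\<^bsub>G i\<^esub> g' i \<otimes>\<^bsub>G i\<^esub> h" if i: "i \<in> J" for i
  proof -
    have iI: "i \<in> I" using i by (simp add: J_def)
    have "j i (g i) \<in> N i" "j i (g' i) \<in> N i" using g(2) g'(2) i iI by (auto simp: NN_def jj_def PiE_iff)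
    moreover have "g i \<in> carrier (G i)" "g' i \<in> carrier (G i)" using g(1) g'(1) iI by auto
    ultimately show ?thesis using N[OF i] by blast
  qed
  then have "\<forall>i\<in>J. \<exists>u. u \<in> B i \<and> (\<exists>h\<in>H i. g i = u \<otimes>\<^bsub>G i\<^esub> g' i \<otimes>\<^bsub>G i\<^esub> h)" by blast
  from bchoice[OF this] obtain u0 where u0: "\<forall>i\<in>J. u0 i \<in> B i \<and> (\<exists>h\<in>H i. g i = u0 i \<otimes>\<^bsub>G i\<^esub> g' i \<otimes>\<^bsub>G i\<^esub> h)"
    by blast
  then have "\<forall>i\<in>J. \<exists>h. h \<in> H i \<and> g i = u0 i \<otimes>\<^bsub>G i\<^esub> g' i \<otimes>\<^bsub>G i\<^esub> h" by blast
  from bchoice[OF this] obtain h0 where h0: "\<forall>i\<in>J. h0 i \<in> H i \<and> g i = u0 i \<otimes>\<^bsub>G i\<^esub> g' i \<otimes>\<^bsub>G i\<^esub> h0 i"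
    by blast
  have uh: "\<And>i. i \<in> J \<Longrightarrow> u0 i \<in> B i \<and> h0 i \<in> H i \<and> g i = u0 i \<otimes>\<^bsub>G i\<^esub> g' i \<otimes>\<^bsub>G i\<^esub> h0 i"
    using u0 h0 by blast
  define u where "u = (\<lambda>i\<in>I. if i \<in> J then u0 i else g i \<otimes>\<^bsub>G i\<^esub> inv\<^bsub>G i\<^esub> g' i)"
  define h where "h = (\<lambda>i\<in>I. if i \<in> J then h0 i else \<one>\<^bsub>G i\<^esub>)"
  have uB: "u \<in> PiE I B"
  proof -
    have "g i \<otimes>\<^bsub>G i\<^esub> inv\<^bsub>G i\<^esub> g' i \<in> B i" if "i \<in> I" "i \<notin> J" for i
    proof -
      have "B i = carrier (G i)" using that tsT by (auto simp: J_def)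
      then show ?thesis using g(1) g'(1) that grp[OF that(1)] by (auto simp: group.inv_closed group.is_monoid monoid.m_closed PiE_iff)
    qed
    then show ?thesis using uh by (auto simp: u_def PiE_iff)
  qed
  have hH: "h \<in> PiE I H" using uh H_one by (auto simp: h_def PiE_iff)
  have uc: "u \<in> carrier PG" using uB B(2) tsT topspace_PT openin_subset by (fastforce simp: PiE_iff)
  have hc: "h \<in> carrier PG" using hH PiH_carrier by blast
  have geq: "g = (u \<otimes>\<^bsub>PG\<^esub> g') \<otimes>\<^bsub>PG\<^esub> h"
  proof (rule ext)
    fix i show "g i = ((u \<otimes>\<^bsub>PG\<^esub> g') \<otimes>\<^bsub>PG\<^esub> h) i"
    proof (cases "i \<in> I")
      case iI: True
      have gi: "group (G i)" using grp iI by blast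
      have gc: "g i \<in> carrier (G i)" "g' i \<in> carrier (G i)" using g(1) g'(1) iI by auto
      show ?thesis
      proof (cases "i \<in> J")
        case True then show ?thesis using uh[OF True] iI by (simp add: u_def h_def)
      next
        case False
        have "g i = (g i \<otimes>\<^bsub>G i\<^esub> inv\<^bsub>G i\<^esub> g' i) \<otimes>\<^bsub>G i\<^esub> g' i \<otimes>\<^bsub>G i\<^esub> \<one>\<^bsub>G i\<^esub>"
          using gi gc by (simp add: group.inv_closed group.is_monoid monoid.m_closed monoid.r_one monoid.m_assoc group.l_inv)
        then show ?thesis using False iI by (simp add: u_def h_def)
      qed
    next
      case False then show ?thesis using g(1) by (auto simp: PiE_iff extensional_def)
    qed
  qed
  have gy: "actY g y0 = actY u (actY g' y0)"
  proof -
    have ug: "u \<otimes>\<^bsub>PG\<^esub> g' \<in> carrier PG" using uc g'(1) group_PG by (simp add: group.is_monoid monoid.m_closed del: carrier_product_group mult_product_group)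
    have "actY g y0 = actY (u \<otimes>\<^bsub>PG\<^esub> g') (actY h y0)"
      using geq F(6)[OF ug hc y0] by metis
    also have "\<dots> = actY (u \<otimes>\<^bsub>PG\<^esub> g') y0" using fix0 hH by simp
    also have "\<dots> = actY u (actY g' y0)" using F(6)[OF uc g'(1) y0] by metis
    finally show ?thesis .
  qed
  have "u \<in> U2" using uB B(4) by blast
  then have in2: "actY g y0 \<in> V2" using gy U2(5) g'(3) by auto
  have gyt: "actY g y0 \<in> topspace Y" using F(4)[OF g(1) y0] .
  have "actY \<one>\<^bsub>PG\<^esub> (actY g y0) \<in> V1" using U1(5) U1(3) g(3) by blast
  then have in1: "actY g y0 \<in> V1" using F(5)[OF gyt] by simp
  show False using in1 in2 V(5) by (auto simp: disjnt_def)
qed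

end


context ctx begin

lemma universal:
  assumes mY: "minimal_flow PG PT Y actY"
  shows "\<exists>f. flow_hom PG PK pa Y actY f \<and> f ` topspace PK = topspace Y"
proof -
  have fl: "flow PG PT Y actY" using mY by (simp add: minimal_flow_def)
  note F = flowD[OF fl]
  note FK = flowD[OF flow_PK]
  obtain y0 where y0: "y0 \<in> topspace Y" "\<forall>h\<in>PiE I H. actY h y0 = y0"
    using product_fixed_point[OF fl] by blast
  define S where "S = (\<lambda>g. (jj g, actY g y0)) ` carrier PG"
  define \<Gamma> where "\<Gamma> = prod_topology PK Y closure_of S"
  have uniq: "\<And>x y1 y2. (x, y1) \<in> \<Gamma> \<Longrightarrow> (x, y2) \<in> \<Gamma> \<Longrightarrow> y1 = y2"
    unfolding \<Gamma>_def S_def using graph_unique[OF fl y0] by blast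
  have S_sub: "S \<subseteq> topspace (prod_topology PK Y)"
    using jj_carrier F(4) y0(1) by (auto simp: S_def)
  have S_G: "S \<subseteq> \<Gamma>" unfolding \<Gamma>_def using S_sub by (rule closure_of_subset)
  have G_sub: "\<Gamma> \<subseteq> topspace PK \<times> topspace Y"
    unfolding \<Gamma>_def using closure_of_subset_topspace[of "prod_topology PK Y" S]
    by (simp only: topspace_prod_topology)
  have cptPKY: "compact_space (prod_topology PK Y)"
    using FK(2) F(2) by (simp add: compact_space_prod_topology)
  have G_closed: "closedin (prod_topology PK Y) \<Gamma>" by (simp add: \<Gamma>_def)
  have proj_closed: "closedin PK (fst ` (\<Gamma> \<inter> (topspace PK \<times> C)))" if C: "closedin Y C" for C
  proof -
    have "closedin (prod_topology PK Y) (\<Gamma> \<inter> (topspace PK \<times> C))"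
    proof (rule closedin_Int[OF G_closed])
      show "closedin (prod_topology PK Y) (topspace PK \<times> C)"
        by (metis closedin_prod_Times_iff closedin_topspace C)
    qed
    then have "compactin (prod_topology PK Y) (\<Gamma> \<inter> (topspace PK \<times> C))"
      using cptPKY closedin_compact_space by blast
    then have "compactin PK (fst ` (\<Gamma> \<inter> (topspace PK \<times> C)))"
      using image_compactin continuous_map_fst by blast
    then show ?thesis using compactin_imp_closedin FK(3) by blast
  qed
  have ex: "\<exists>y. (x, y) \<in> \<Gamma>" if x: "x \<in> topspace PK" for x
  proof -
    have cl: "closedin PK (fst ` (\<Gamma> \<inter> (topspace PK \<times> topspace Y)))"
      using proj_closed[of "topspace Y"] by simp
    have "jj ` carrier PG \<subseteq> fst ` (\<Gamma> \<inter> (topspace PK \<times> topspace Y))"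
    proof
      fix w assume "w \<in> jj ` carrier PG"
      then obtain g where g: "g \<in> carrier PG" "w = jj g" by blast
      have "(jj g, actY g y0) \<in> \<Gamma>" using S_G g(1) by (auto simp: S_def)
      then have "(jj g, actY g y0) \<in> \<Gamma> \<inter> (topspace PK \<times> topspace Y)" using G_sub by blast
      then show "w \<in> fst ` (\<Gamma> \<inter> (topspace PK \<times> topspace Y))" using g(2) by force
    qed
    then have "PK closure_of (jj ` carrier PG) \<subseteq> fst ` (\<Gamma> \<inter> (topspace PK \<times> topspace Y))"
      using cl by (rule closure_of_minimal)
    then have "x \<in> fst ` (\<Gamma> \<inter> (topspace PK \<times> topspace Y))" using x jj_dense by blast
    then show ?thesis by force
  qed
  define f where "f x = (SOME y. (x, y) \<in> \<Gamma>)" for x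
  have fG: "(x, f x) \<in> \<Gamma>" if "x \<in> topspace PK" for x
    unfolding f_def using ex[OF that] by (rule someI_ex)
  have fU: "y = f x" if "(x, y) \<in> \<Gamma>" for x y
  proof -
    have "x \<in> topspace PK" using that G_sub by blast
    then show ?thesis using uniq[OF that fG] by simp
  qed
  have ftop: "f x \<in> topspace Y" if "x \<in> topspace PK" for x
    using fG[OF that] G_sub by blast
  have cont: "continuous_map PK Y f"
    unfolding continuous_map_closedin
  proof (intro conjI allI impI)
    show "f \<in> topspace PK \<rightarrow> topspace Y" using ftop by blast
    fix C assume C: "closedin Y C"
    have "{x \<in> topspace PK. f x \<in> C} = fst ` (\<Gamma> \<inter> (topspace PK \<times> C))"
    proof
      show "{x \<in> topspace PK. f x \<in> C} \<subseteq> fst ` (\<Gamma> \<inter> (topspace PK \<times> C))"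
      proof
        fix x assume "x \<in> {x \<in> topspace PK. f x \<in> C}"
        then have x: "x \<in> topspace PK" "f x \<in> C" by auto
        then have "(x, f x) \<in> \<Gamma> \<inter> (topspace PK \<times> C)" using fG by blast
        then show "x \<in> fst ` (\<Gamma> \<inter> (topspace PK \<times> C))" by force
      qed
      show "fst ` (\<Gamma> \<inter> (topspace PK \<times> C)) \<subseteq> {x \<in> topspace PK. f x \<in> C}"
      proof
        fix x assume "x \<in> fst ` (\<Gamma> \<inter> (topspace PK \<times> C))"
        then obtain y where y: "(x, y) \<in> \<Gamma>" "x \<in> topspace PK" "y \<in> C" by force
        then show "x \<in> {x \<in> topspace PK. f x \<in> C}" using fU[OF y(1)] by simp
      qed
    qed
    then show "closedin PK {x \<in> topspace PK. f x \<in> C}" using proj_closed[OF C] by simp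
  qed
  have equiv: "f (pa g x) = actY g (f x)" if g: "g \<in> carrier PG" and x: "x \<in> topspace PK" for g x
  proof -
    define m where "m = (\<lambda>z. (pa g (fst z), actY g (snd z)))"
    have cm: "continuous_map (prod_topology PK Y) (prod_topology PK Y) m"
    proof -
      have c1: "continuous_map PK PK (pa g)"
      proof -
        have "continuous_map PK (prod_topology PT PK) (\<lambda>y. (g, y))"
          using g topspace_PT continuous_map_id by (intro continuous_map_pairedI) (simp_all add: id_def)
        then have "continuous_map PK PK ((\<lambda>(g, x). pa g x) \<circ> (\<lambda>y. (g, y)))"
          using FK(7) continuous_map_compose by blast
        then show ?thesis by (simp add: o_def)
      qed
      have c2: "continuous_map Y Y (actY g)"
      proof -
        have "continuous_map Y (prod_topology PT Y) (\<lambda>y. (g, y))"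
          using g topspace_PT continuous_map_id by (intro continuous_map_pairedI) (simp_all add: id_def)
        then have "continuous_map Y Y ((\<lambda>(g, x). actY g x) \<circ> (\<lambda>y. (g, y)))"
          using F(7) continuous_map_compose by blast
        then show ?thesis by (simp add: o_def)
      qed
      have "continuous_map (prod_topology PK Y) PK (\<lambda>z. pa g (fst z))"
        using continuous_map_compose[OF continuous_map_fst c1] by (simp add: o_def)
      moreover have "continuous_map (prod_topology PK Y) Y (\<lambda>z. actY g (snd z))"
        using continuous_map_compose[OF continuous_map_snd c2] by (simp add: o_def)
      ultimately show ?thesis unfolding m_def by (rule continuous_map_pairedI)
    qed
    have mS: "m ` S \<subseteq> S"
    proof
      fix w assume "w \<in> m ` S"
      then obtain g' where g': "g' \<in> carrier PG" "w = m (jj g', actY g' y0)" by (auto simp: S_def)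
      have gg': "g \<otimes>\<^bsub>PG\<^esub> g' \<in> carrier PG"
        using monoid.m_closed[OF group.is_monoid[OF group_PG] g g'(1)] .
      have e1: "pa g (jj g') = jj (g \<otimes>\<^bsub>PG\<^esub> g')"
      proof (rule ext)
        fix i show "pa g (jj g') i = jj (g \<otimes>\<^bsub>PG\<^esub> g') i"
        proof (cases "i \<in> I")
          case True
          have gi: "g i \<in> carrier (G i)" "g' i \<in> carrier (G i)"
            using g g'(1) True by (auto simp: PiE_iff)
          show ?thesis using True cf_eqv[OF True gi] by (simp add: product_action_def jj_def)
        next
          case False then show ?thesis by (simp add: product_action_def jj_def)
        qed
      qed
      have e2: "actY g (actY g' y0) = actY (g \<otimes>\<^bsub>PG\<^esub> g') y0"
        using F(6)[OF g g'(1) y0(1)] by simp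
      have "w = (jj (g \<otimes>\<^bsub>PG\<^esub> g'), actY (g \<otimes>\<^bsub>PG\<^esub> g') y0)"
        using g'(2) e1 e2 by (simp add: m_def)
      then show "w \<in> S" using gg' by (auto simp: S_def)
    qed
    have "m ` \<Gamma> \<subseteq> prod_topology PK Y closure_of (m ` S)"
      unfolding \<Gamma>_def by (rule continuous_map_image_closure_subset[OF cm])
    also have "\<dots> \<subseteq> \<Gamma>" unfolding \<Gamma>_def by (rule closure_of_mono[OF mS])
    finally have "m (x, f x) \<in> \<Gamma>" using fG[OF x] by blast
    then have "(pa g x, actY g (f x)) \<in> \<Gamma>" by (simp add: m_def)
    then show ?thesis using fU by metis
  qed
  have surj: "f ` topspace PK = topspace Y"
  proof
    show "f ` topspace PK \<subseteq> topspace Y" using ftop by blast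
    have "compactin Y (f ` topspace PK)"
      using image_compactin[OF FK(2)[unfolded compact_space_def] cont] .
    then have clf: "closedin Y (f ` topspace PK)" using compactin_imp_closedin F(3) by blast
    have "(\<lambda>g. actY g y0) ` carrier PG \<subseteq> f ` topspace PK"
    proof
      fix w assume "w \<in> (\<lambda>g. actY g y0) ` carrier PG"
      then obtain g where g: "g \<in> carrier PG" "w = actY g y0" by blast
      have "(jj g, actY g y0) \<in> \<Gamma>" using S_G g(1) by (auto simp: S_def)
      then have "actY g y0 = f (jj g)" by (rule fU)
      then show "w \<in> f ` topspace PK" using g jj_carrier by blast
    qed
    then have "Y closure_of ((\<lambda>g. actY g y0) ` carrier PG) \<subseteq> f ` topspace PK"
      using clf by (rule closure_of_minimal)
    moreover have "Y closure_of ((\<lambda>g. actY g y0) ` carrier PG) = topspace Y"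
      using mY y0(1) unfolding minimal_flow_def by blast
    ultimately show "topspace Y \<subseteq> f ` topspace PK" by simp
  qed
  show ?thesis
    unfolding flow_hom_def using cont equiv surj by blast
qed

end

theorem proposition3:
  fixes I :: "'i set"
    and G :: "'i \<Rightarrow> 'g monoid" and T :: "'i \<Rightarrow> 'g topology"
    and H :: "'i \<Rightarrow> 'g set"
    and K :: "'i \<Rightarrow> 'x topology" and act :: "'i \<Rightarrow> 'g \<Rightarrow> 'x \<Rightarrow> 'x"
    and j :: "'i \<Rightarrow> 'g \<Rightarrow> 'x"
  assumes "\<And>i. i \<in> I \<Longrightarrow> hausdorff_topological_group (G i) (T i)"
    and "\<And>i. i \<in> I \<Longrightarrow> subgroup (H i) (G i)"
    and "\<And>i. i \<in> I \<Longrightarrow> closedin (T i) (H i)"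
    and "\<And>i. i \<in> I \<Longrightarrow> extremely_amenable_subgroup (G i) (T i) (H i)"
    and "\<And>i. i \<in> I \<Longrightarrow> co_precompact (G i) (T i) (H i)"
    and "\<And>i. i \<in> I \<Longrightarrow> completion_flow (G i) (T i) (H i) (K i) (act i) (j i)"
    and "\<And>i. i \<in> I \<Longrightarrow> is_UMF (G i) (T i) (K i) (act i)"
  shows "is_UMF (product_group I G) (product_topology T I)
                (product_topology K I) (product_action I act)"
proof -
  have tg: "\<And>i. i \<in> I \<Longrightarrow> topological_group (G i) (T i)"
    using assms(1) by (simp add: hausdorff_topological_group_def)
  have grp: "\<And>i. i \<in> I \<Longrightarrow> group (G i)" using tg by (simp add: topological_group_def)
  have tsT: "\<And>i. i \<in> I \<Longrightarrow> topspace (T i) = carrier (G i)" using tg by (simp add: topological_group_def)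
  have mf: "\<And>i. i \<in> I \<Longrightarrow> minimal_flow (G i) (T i) (K i) (act i)"
    using assms(7) by (simp add: is_UMF_def)
  interpret C: ctx I G T H K act j
    by (rule ctx.intro[OF grp tsT assms(2) assms(4) assms(6) mf])
  show ?thesis
    unfolding is_UMF_def using C.minimal_PK C.universal by blast
qed


end
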